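(* Let $Y=[y_{ij}]$ be an $N\times k$ array with entries in $\{-1,1\}$, let $\ell\subseteq\{1,\dots,k\}$ with $|\ell|=r>0$, and let $g\in G(k)^{\rm OD}$. Then $J_r(\ell)(g(Y))=\pm J_{r'}(\ell')(Y)$ for some $\ell'\subseteq\{1,\dots,k\}$, where $r'=|\ell'|\in\{r,r+1\}$ if $r$ is odd and $r'\in\{r,r-1\}$ if $r$ is even.
   Context: For $\ell\subseteq\{1,\dots,k\}$ with $|\ell|=r\ge1$, the $J$-characteristic is $J_r(\ell)(Y)=\sum_{i=1}^N\prod_{j\in\ell}y_{ij}$, and $J_0(\emptyset)(Y)=N$. $G(k)^{\rm OD}$ is the group of permutations of $\{-1,1\}^k$ generated by coordinate permutations, sign changes of single coordinates, and $R_i(z_1,\dots,z_k)=(z_1z_i,\dots,z_{i-1}z_i,z_i,z_{i+1}z_i,\dots,z_kz_i)$ for $i=1,\dots,k$; $g(Y)$ is obtained by applying $g$ to each row of $Y$. *)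

theory Defs
  imports "HOL-Combinatorics.Permutations"
begin

text \<open>A row z of the array is a function nat => int; only the coordinates 1..k matter.
  The generators of G(k)^OD act on coordinates 1..k and leave other coordinates unchanged.\<close>

definition coord_perm :: "(nat \<Rightarrow> nat) \<Rightarrow> (nat \<Rightarrow> int) \<Rightarrow> (nat \<Rightarrow> int)" where
  "coord_perm \<sigma> z = (\<lambda>j. z (\<sigma> j))"

definition sign_change :: "nat \<Rightarrow> (nat \<Rightarrow> int) \<Rightarrow> (nat \<Rightarrow> int)" where
  "sign_change i z = z(i := - z i)"

definition R_map :: "nat \<Rightarrow> nat \<Rightarrow> (nat \<Rightarrow> int) \<Rightarrow> (nat \<Rightarrow> int)" where
  "R_map k i z = (\<lambda>j. if j \<in> {1..k} \<and> j \<noteq> i then z j * z i else z j)"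

text \<open>Since each generator acts as a
  permutation of the finite set {-1,1}^k, the generated group equals the generated monoid,
  i.e. the closure of the identity under composition with generators.\<close>

inductive_set G_OD :: "nat \<Rightarrow> ((nat \<Rightarrow> int) \<Rightarrow> (nat \<Rightarrow> int)) set" for k :: nat where
  G_id: "id \<in> G_OD k"
| G_perm: "g \<in> G_OD k \<Longrightarrow> \<sigma> permutes {1..k} \<Longrightarrow> coord_perm \<sigma> \<circ> g \<in> G_OD k"
| G_sign: "g \<in> G_OD k \<Longrightarrow> i \<in> {1..k} \<Longrightarrow> sign_change i \<circ> g \<in> G_OD k"
| G_R: "g \<in> G_OD k \<Longrightarrow> i \<in> {1..k} \<Longrightarrow> R_map k i \<circ> g \<in> G_OD k"

definition pm_array :: "nat \<Rightarrow> nat \<Rightarrow> (nat \<Rightarrow> nat \<Rightarrow> int) \<Rightarrow> bool" where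
  "pm_array N k Y \<longleftrightarrow> (\<forall>i\<in>{1..N}. \<forall>j\<in>{1..k}. Y i j \<in> {-1, 1})"

definition apply_rows :: "((nat \<Rightarrow> int) \<Rightarrow> (nat \<Rightarrow> int)) \<Rightarrow> (nat \<Rightarrow> nat \<Rightarrow> int) \<Rightarrow> (nat \<Rightarrow> nat \<Rightarrow> int)" where
  "apply_rows g Y = (\<lambda>i. g (Y i))"

text \<open>J-characteristic J_r(l)(Y), with r = card l (for l = {} this is N).\<close>
definition J_char :: "nat \<Rightarrow> nat set \<Rightarrow> (nat \<Rightarrow> nat \<Rightarrow> int) \<Rightarrow> int" where
  "J_char N l Y = (\<Sum>i\<in>{1..N}. \<Prod>j\<in>l. Y i j)"

end

theory Submission
  imports Defs
begin

definition pmv :: "nat \<Rightarrow> (nat \<Rightarrow> int) \<Rightarrow> bool" where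
  "pmv k z \<longleftrightarrow> (\<forall>j\<in>{1..k}. z j \<in> {-1, 1})"

lemma pmv_sq: assumes "pmv k w" "i \<in> {1..k}" shows "w i * w i = 1"
proof -
  have "w i = -1 \<or> w i = 1" using assms unfolding pmv_def by blast
  then show ?thesis by auto
qed

lemma pmv_pow: assumes "pmv k w" "i \<in> {1..k}"
  shows "w i ^ n = (if odd n then w i else 1)"
proof (induction n)
  case 0 then show ?case by simp
next
  case (Suc n) then show ?case using pmv_sq[OF assms] by auto
qed

lemma G_pres: "g \<in> G_OD k \<Longrightarrow> pmv k z \<Longrightarrow> pmv k (g z)"
proof (induction g rule: G_OD.induct)
  case G_id then show ?case by simp
next
  case (G_perm g \<sigma>)
  have "pmv k (g z)" using G_perm by simp
  then show ?case unfolding pmv_def coord_perm_def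
    using permutes_in_image[OF G_perm.hyps(2)] by auto
next
  case (G_sign g i)
  then show ?case unfolding pmv_def sign_change_def by auto
next
  case (G_R g i)
  then have "pmv k (g z)" by simp
  show ?case unfolding pmv_def
  proof
    fix j assume j: "j \<in> {1..k}"
    have a: "g z i = -1 \<or> g z i = 1" using G_R.hyps(2) \<open>pmv k (g z)\<close> unfolding pmv_def by blast
    have b: "g z j = -1 \<or> g z j = 1" using j \<open>pmv k (g z)\<close> unfolding pmv_def by blast
    show "(R_map k i \<circ> g) z j \<in> {- 1, 1}" using a b unfolding R_map_def by auto
  qed
qed

lemma perm_char:
  assumes "\<sigma> permutes {1..k}" "l \<subseteq> {1..k}"
  shows "(\<Prod>j\<in>l. coord_perm \<sigma> w j) = (\<Prod>j\<in>\<sigma> ` l. w j)"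
    "\<sigma> ` l \<subseteq> {1..k}" "card (\<sigma> ` l) = card l"
proof -
  have inj: "inj_on \<sigma> l" using permutes_inj[OF assms(1)] by (meson inj_on_subset subset_UNIV)
  show "(\<Prod>j\<in>l. coord_perm \<sigma> w j) = (\<Prod>j\<in>\<sigma> ` l. w j)"
    unfolding coord_perm_def using prod.reindex[OF inj, of w] by simp
  show "\<sigma> ` l \<subseteq> {1..k}" using assms permutes_in_image by fastforce
  show "card (\<sigma> ` l) = card l" using card_image[OF inj] .
qed

lemma sign_char:
  assumes "l \<subseteq> {1..k}"
  shows "(\<Prod>j\<in>l. sign_change i w j) = (if i \<in> l then -1 else 1) * (\<Prod>j\<in>l. w j)"
proof -
  have fin: "finite l" using assms(1) by (rule finite_subset) simp
  show ?thesis
  proof (cases "i \<in> l")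
    case True
    have "(\<Prod>j\<in>l. sign_change i w j) = sign_change i w i * (\<Prod>j\<in>l-{i}. sign_change i w j)"
      using prod.remove[OF fin True] by simp
    also have "(\<Prod>j\<in>l-{i}. sign_change i w j) = (\<Prod>j\<in>l-{i}. w j)"
      by (rule prod.cong) (auto simp: sign_change_def)
    also have "(\<Prod>j\<in>l. w j) = w i * (\<Prod>j\<in>l-{i}. w j)"
      using prod.remove[OF fin True] by simp
    ultimately show ?thesis using True by (simp add: sign_change_def)
  next
    case False
    have "(\<Prod>j\<in>l. sign_change i w j) = (\<Prod>j\<in>l. w j)"
      by (rule prod.cong) (use False in \<open>auto simp: sign_change_def\<close>)
    then show ?thesis using False by simp
  qed
qed

definition Rset :: "nat \<Rightarrow> nat set \<Rightarrow> nat set" where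
  "Rset i l = (if i \<in> l then (if odd (card l) then l else l - {i})
               else (if odd (card l) then insert i l else l))"

lemma R_char:
  assumes "l \<subseteq> {1..k}" "i \<in> {1..k}" "pmv k w"
  shows "(\<Prod>j\<in>l. R_map k i w j) = (\<Prod>j\<in>Rset i l. w j)"
    "Rset i l \<subseteq> {1..k}" "(card (Rset i l) + 1) div 2 = (card l + 1) div 2"
proof -
  have fin: "finite l" using assms(1) by (rule finite_subset) simp
  show "Rset i l \<subseteq> {1..k}" unfolding Rset_def using assms by auto
  show "(card (Rset i l) + 1) div 2 = (card l + 1) div 2"
  proof (cases "i \<in> l")
    case True
    have "card l \<ge> 1" proof -
      have "l \<noteq> {}" using True by blast
      then have "0 < card l" using fin by (simp add: card_gt_0_iff)
      then show ?thesis by simp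
    qed
    show ?thesis
    proof (cases "odd (card l)")
      case True
      then show ?thesis using \<open>i \<in> l\<close> by (simp add: Rset_def)
    next
      case False
      have r: "Rset i l = l - {i}" using False \<open>i \<in> l\<close> by (simp add: Rset_def)
      have c: "card (l - {i}) = card l - 1" using \<open>i \<in> l\<close> fin by simp
      have "(card l - 1 + 1) div 2 = (card l + 1) div 2"
        using False \<open>card l \<ge> 1\<close> by presburger
      then show ?thesis unfolding r c .
    qed
  next
    case False
    show ?thesis
    proof (cases "odd (card l)")
      case False
      then show ?thesis using \<open>i \<notin> l\<close> by (simp add: Rset_def)
    next
      case True
      have r: "Rset i l = insert i l" using True \<open>i \<notin> l\<close> by (simp add: Rset_def)
      have c: "card (insert i l) = card l + 1" using \<open>i \<notin> l\<close> fin by simp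
      have "(card l + 1 + 1) div 2 = (card l + 1) div 2"
        using True by presburger
      then show ?thesis unfolding r c .
    qed
  qed
  show "(\<Prod>j\<in>l. R_map k i w j) = (\<Prod>j\<in>Rset i l. w j)"
  proof (cases "i \<in> l")
    case True
    have c: "card (l - {i}) = card l - 1" using True fin by simp
    have cl: "card l \<ge> 1" proof -
      have "l \<noteq> {}" using True by blast
      then have "0 < card l" using fin by (simp add: card_gt_0_iff)
      then show ?thesis by simp
    qed
    have "(\<Prod>j\<in>l. R_map k i w j) = R_map k i w i * (\<Prod>j\<in>l-{i}. R_map k i w j)"
      using prod.remove[OF fin True] by simp
    also have "(\<Prod>j\<in>l-{i}. R_map k i w j) = (\<Prod>j\<in>l-{i}. w j * w i)"
      by (rule prod.cong) (use assms in \<open>auto simp: R_map_def\<close>)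
    also have "\<dots> = (\<Prod>j\<in>l-{i}. w j) * w i ^ (card l - 1)"
      by (simp add: prod.distrib c)
    finally have e0: "(\<Prod>j\<in>l. R_map k i w j) = w i * ((\<Prod>j\<in>l-{i}. w j) * w i ^ (card l - 1))"
      by (simp add: R_map_def)
    have pw: "w i ^ card l = w i * w i ^ (card l - 1)"
    proof -
      have "card l = Suc (card l - 1)" using cl by simp
      then show ?thesis by (metis power_Suc)
    qed
    have e: "(\<Prod>j\<in>l. R_map k i w j) = w i ^ card l * (\<Prod>j\<in>l-{i}. w j)"
      unfolding e0 pw by (simp only: mult_ac)
    have p: "(\<Prod>j\<in>l. w j) = w i * (\<Prod>j\<in>l-{i}. w j)"
      using prod.remove[OF fin True] by simp
    show ?thesis using e p True pmv_pow[OF assms(3,2)] by (simp add: Rset_def)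
  next
    case False
    have "(\<Prod>j\<in>l. R_map k i w j) = (\<Prod>j\<in>l. w j * w i)"
      by (rule prod.cong) (use assms False in \<open>auto simp: R_map_def\<close>)
    also have "\<dots> = w i ^ card l * (\<Prod>j\<in>l. w j)" by (simp add: prod.distrib)
    finally show ?thesis using False fin pmv_pow[OF assms(3,2)] by (simp add: Rset_def)
  qed
qed

lemma pmv1: "pmv k (\<lambda>_. 1)" by (simp add: pmv_def)

lemma main:
  assumes "g \<in> G_OD k"
  shows "\<forall>l. l \<subseteq> {1..k} \<longrightarrow> (\<exists>l' \<subseteq> {1..k}. \<exists>s \<in> {1, -1::int}.
     (\<forall>z. pmv k z \<longrightarrow> (\<Prod>j\<in>l. g z j) = s * (\<Prod>j\<in>l'. z j)) \<and>
     (card l' + 1) div 2 = (card l + 1) div 2)"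
  using assms
proof (induction g rule: G_OD.induct)
  case G_id
  show ?case
  proof (intro allI impI)
    fix l :: "nat set" assume l: "l \<subseteq> {1..k}"
    show "\<exists>l' \<subseteq> {1..k}. \<exists>s \<in> {1, -1::int}.
     (\<forall>z. pmv k z \<longrightarrow> (\<Prod>j\<in>l. id z j) = s * (\<Prod>j\<in>l'. z j)) \<and>
     (card l' + 1) div 2 = (card l + 1) div 2"
      using l by (intro exI[of _ l] conjI bexI[of _ 1]) auto
  qed
next
  case (G_perm g \<sigma>)
  show ?case
  proof (intro allI impI)
    fix l :: "nat set" assume l: "l \<subseteq> {1..k}"
    note pc = perm_char[OF G_perm.hyps(2) l]
    obtain l' s where l': "l' \<subseteq> {1..k}" "s \<in> {1, -1::int}"
      "\<forall>z. pmv k z \<longrightarrow> (\<Prod>j\<in>\<sigma> ` l. g z j) = s * (\<Prod>j\<in>l'. z j)"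
      "(card l' + 1) div 2 = (card (\<sigma> ` l) + 1) div 2"
      using mp[OF spec[OF G_perm.IH, of "\<sigma> ` l"] pc(2)] by blast
    show "\<exists>l' \<subseteq> {1..k}. \<exists>s \<in> {1, -1::int}.
     (\<forall>z. pmv k z \<longrightarrow> (\<Prod>j\<in>l. (coord_perm \<sigma> \<circ> g) z j) = s * (\<Prod>j\<in>l'. z j)) \<and>
     (card l' + 1) div 2 = (card l + 1) div 2"
      using l' pc by (intro exI[of _ l'] conjI bexI[of _ s]) auto
  qed
next
  case (G_sign g i)
  show ?case
  proof (intro allI impI)
    fix l :: "nat set" assume l: "l \<subseteq> {1..k}"
    obtain l' s where l': "l' \<subseteq> {1..k}" "s \<in> {1, -1::int}"
      "\<forall>z. pmv k z \<longrightarrow> (\<Prod>j\<in>l. g z j) = s * (\<Prod>j\<in>l'. z j)"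
      "(card l' + 1) div 2 = (card l + 1) div 2"
      using mp[OF spec[OF G_sign.IH, of l] l] by blast
    let ?t = "(if i \<in> l then -1 else 1) * s"
    have t: "?t \<in> {1, -1::int}" using l'(2) by auto
    show "\<exists>l' \<subseteq> {1..k}. \<exists>s \<in> {1, -1::int}.
     (\<forall>z. pmv k z \<longrightarrow> (\<Prod>j\<in>l. (sign_change i \<circ> g) z j) = s * (\<Prod>j\<in>l'. z j)) \<and>
     (card l' + 1) div 2 = (card l + 1) div 2"
      using l' t sign_char[OF l] by (intro exI[of _ l'] conjI bexI[of _ ?t]) auto
  qed
next
  case (G_R g i)
  show ?case
  proof (intro allI impI)
    fix l :: "nat set" assume l: "l \<subseteq> {1..k}"
    note rc = R_char[OF l G_R.hyps(2)]
    obtain l' s where l': "l' \<subseteq> {1..k}" "s \<in> {1, -1::int}"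
      "\<forall>z. pmv k z \<longrightarrow> (\<Prod>j\<in>Rset i l. g z j) = s * (\<Prod>j\<in>l'. z j)"
      "(card l' + 1) div 2 = (card (Rset i l) + 1) div 2"
      using mp[OF spec[OF G_R.IH, of "Rset i l"] R_char(2)[OF l G_R.hyps(2) pmv1]] by blast
    have "(card (Rset i l) + 1) div 2 = (card l + 1) div 2"
      using R_char(3)[OF l G_R.hyps(2) pmv1] .
    moreover have "\<forall>z. pmv k z \<longrightarrow> (\<Prod>j\<in>l. (R_map k i \<circ> g) z j) = s * (\<Prod>j\<in>l'. z j)"
      using l'(3) R_char(1)[OF l G_R.hyps(2)] G_pres[OF G_R.hyps(1)] by simp
    ultimately show "\<exists>l' \<subseteq> {1..k}. \<exists>s \<in> {1, -1::int}.
     (\<forall>z. pmv k z \<longrightarrow> (\<Prod>j\<in>l. (R_map k i \<circ> g) z j) = s * (\<Prod>j\<in>l'. z j)) \<and>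
     (card l' + 1) div 2 = (card l + 1) div 2"
      using l' by (intro exI[of _ l'] conjI bexI[of _ s]) auto
  qed
qed

lemma arith_aux:
  fixes c r :: nat
  assumes "(c + 1) div 2 = (r + 1) div 2" "0 < r"
  shows "(odd r \<longrightarrow> c = r \<or> c = r + 1) \<and> (even r \<longrightarrow> c = r \<or> c = r - 1)"
  using assms by presburger

theorem lemma7:
  fixes N k r :: nat and Y :: "nat \<Rightarrow> nat \<Rightarrow> int" and l :: "nat set"
    and g :: "(nat \<Rightarrow> int) \<Rightarrow> (nat \<Rightarrow> int)"
  assumes "pm_array N k Y"
    and "l \<subseteq> {1..k}" and "card l = r" and "r > 0"
    and "g \<in> G_OD k"
  shows "\<exists>l' \<subseteq> {1..k}. \<exists>s \<in> {1, -1::int}.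
           J_char N l (apply_rows g Y) = s * J_char N l' Y \<and>
           (if odd r then card l' \<in> {r, r + 1} else card l' \<in> {r, r - 1})"
proof -
  obtain l' s where l': "l' \<subseteq> {1..k}" "s \<in> {1, -1::int}"
      "\<forall>z. pmv k z \<longrightarrow> (\<Prod>j\<in>l. g z j) = s * (\<Prod>j\<in>l'. z j)"
      "(card l' + 1) div 2 = (card l + 1) div 2"
    using mp[OF spec[OF main[OF assms(5)], of l] assms(2)] by blast
  have "J_char N l (apply_rows g Y) = (\<Sum>i\<in>{1..N}. s * (\<Prod>j\<in>l'. Y i j))"
    unfolding J_char_def apply_rows_def
  proof (rule sum.cong)
    fix i assume "i \<in> {1..N}"
    then have "pmv k (Y i)" using assms(1) unfolding pm_array_def pmv_def by auto
    then show "(\<Prod>j\<in>l. g (Y i) j) = s * (\<Prod>j\<in>l'. Y i j)" using l'(3) by simp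
  qed simp
  also have "\<dots> = s * J_char N l' Y" unfolding J_char_def by (simp add: sum_distrib_left)
  finally have e: "J_char N l (apply_rows g Y) = s * J_char N l' Y" .
  have c: "if odd r then card l' \<in> {r, r + 1} else card l' \<in> {r, r - 1}"
    using arith_aux[OF l'(4)[unfolded assms(3)] assms(4)] by (cases "odd r") simp_all
  show ?thesis
    apply (rule exI[of _ l'])
    apply (rule conjI[OF l'(1)])
    apply (rule bexI[OF _ l'(2)])
    using e c by (rule conjI)
qed

end
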